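(* Let $V$ satisfy the assumptions $( * )$ (see context), and let $a=-c/24$, $b=h-c/24$. Then exactly one of $-24a$ and $-24b$ is positive, and it equals the effective central charge $\tilde c:=c-24h_{\min}$, where $h_{\min}:=\min(0,h)$.
   Context: Assumptions $( * )$: $V$ is a strongly regular (simple, rational, $C_2$-cofinite, CFT type, self-dual) vertex operator algebra of central charge $c$; $V$ has an irreducible module $M$ of conformal weight $h$ such that $Z_V(\tau)=q^{-c/24}\sum_{n\ge0}\dim V_nq^n$ and $Z_M(\tau)=q^{h-c/24}\sum_{n\ge0}\dim M_{h+n}q^n$ span the 2-dimensional space $\mathfrak{ch}_V$ of characters of irreducible $V$-modules; $\mathfrak{ch}_V$ is exactly the solution space of $(D_0^2+k_1E_4)f=0$, $k_1\in\mathbf{C}$, where $q=e^{2\pi i\tau}$, $D_k=q\frac{d}{dq}-\frac{k}{12}E_2$, $E_2=1-24\sum_{n\ge1}\sigma_1(n)q^n$, $D_0^2=D_2\circ D_0$, $E_4$ the weight-4 Eisenstein series; and the representation of $SL_2(\mathbf{Z})$ on $\mathfrak{ch}_V$ given by $f\mapsto f(\gamma\tau)$ is irreducible. *)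

theory Defs
  imports "HOL-Analysis.Analysis"
begin

definition uhp :: "complex set" where
  "uhp = {\<tau>. Im \<tau> > 0}"

definition qpow :: "complex \<Rightarrow> complex \<Rightarrow> complex" where
  "qpow x \<tau> = exp (2 * of_real pi * \<i> * x * \<tau>)"

definition sigma_k :: "nat \<Rightarrow> nat \<Rightarrow> nat" where
  "sigma_k k n = (\<Sum>d\<in>{d. d dvd n}. d ^ k)"

definition E2 :: "complex \<Rightarrow> complex" where
  "E2 \<tau> = 1 - 24 * (\<Sum>n. of_nat (sigma_k 1 (Suc n)) * qpow (of_nat (Suc n)) \<tau>)"

definition E4 :: "complex \<Rightarrow> complex" where
  "E4 \<tau> = 1 + 240 * (\<Sum>n. of_nat (sigma_k 3 (Suc n)) * qpow (of_nat (Suc n)) \<tau>)"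

text \<open>Serre derivative \<open>D_k = q d/dq - (k/12) E_2\<close>, with \<open>q d/dq = (2 \<pi> i)^{-1} d/d\<tau>\<close>.\<close>
definition serre_D :: "real \<Rightarrow> (complex \<Rightarrow> complex) \<Rightarrow> complex \<Rightarrow> complex" where
  "serre_D k f \<tau> = deriv f \<tau> / (2 * of_real pi * \<i>) - of_real (k / 12) * E2 \<tau> * f \<tau>"

definition D0sq :: "(complex \<Rightarrow> complex) \<Rightarrow> complex \<Rightarrow> complex" where
  "D0sq f = serre_D 2 (serre_D 0 f)"

definition mlde_sol :: "complex \<Rightarrow> (complex \<Rightarrow> complex) \<Rightarrow> bool" where
  "mlde_sol k1 f \<longleftrightarrow> f holomorphic_on uhp \<and>
     (\<forall>\<tau>\<in>uhp. D0sq f \<tau> + k1 * E4 \<tau> * f \<tau> = 0)"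

definition qchar :: "real \<Rightarrow> (nat \<Rightarrow> nat) \<Rightarrow> complex \<Rightarrow> complex" where
  "qchar x d \<tau> = qpow (of_real x) \<tau> * (\<Sum>n. of_nat (d n) * qpow (of_nat n) \<tau>)"

definition SL2Z :: "(int \<times> int \<times> int \<times> int) set" where
  "SL2Z = {(a, b, c, d). a * d - b * c = 1}"

definition sl2_act :: "int \<times> int \<times> int \<times> int \<Rightarrow> (complex \<Rightarrow> complex) \<Rightarrow> complex \<Rightarrow> complex" where
  "sl2_act g f \<tau> = (case g of (a, b, c, d) \<Rightarrow>
      f ((of_int a * \<tau> + of_int b) / (of_int c * \<tau> + of_int d)))"

definition in_span2 :: "(complex \<Rightarrow> complex) \<Rightarrow> (complex \<Rightarrow> complex) \<Rightarrow> (complex \<Rightarrow> complex) \<Rightarrow> bool" where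
  "in_span2 f1 f2 g \<longleftrightarrow> (\<exists>\<alpha> \<beta>. \<forall>\<tau>\<in>uhp. g \<tau> = \<alpha> * f1 \<tau> + \<beta> * f2 \<tau>)"

end

theory Submission
  imports Defs "HOL-Real_Asymp.Real_Asymp"
begin
lemma qpow_nat: "qpow (of_nat n) \<tau> = (qpow 1 \<tau>) ^ n"
proof -
  have "qpow (of_nat n) \<tau> = exp (of_nat n * (2 * of_real pi * \<i> * 1 * \<tau>))"
    unfolding qpow_def by (simp add: algebra_simps)
  also have "\<dots> = (qpow 1 \<tau>) ^ n" unfolding exp_of_nat_mult qpow_def ..
  finally show ?thesis .
qed

lemma norm_qpow1: "norm (qpow 1 \<tau>) = exp (- 2 * pi * Im \<tau>)"
  unfolding qpow_def by simp

lemma qpow_nz: "qpow x \<tau> \<noteq> 0"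
  unfolding qpow_def by simp

lemma uhp_norm: "\<tau> \<in> uhp \<Longrightarrow> norm (qpow 1 \<tau>) < 1"
  unfolding norm_qpow1 uhp_def by simp

lemma open_uhp: "open uhp"
  unfolding uhp_def by (simp add: open_halfspace_Im_gt)

lemma qpow1_surj:
  assumes "z \<noteq> 0" "norm z < 1"
  shows "\<exists>\<tau>\<in>uhp. qpow 1 \<tau> = z"
proof -
  define \<tau> where "\<tau> = Ln z / (2 * of_real pi * \<i>)"
  have "qpow 1 \<tau> = exp (Ln z)" unfolding qpow_def \<tau>_def by simp
  also have "\<dots> = z" using assms by simp
  finally have 1: "qpow 1 \<tau> = z" .
  have "Im \<tau> = - Re (Ln z) / (2 * pi)" unfolding \<tau>_def
    by (simp add: Im_divide field_simps power2_eq_square)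
  also have "Re (Ln z) = ln (norm z)" using assms by simp
  finally have e: "Im \<tau> = - ln (norm z) / (2 * pi)" .
  have "ln (norm z) < 0" using assms by simp
  hence "ln (norm z) / (2 * pi) < 0" by (intro divide_neg_pos) auto
  hence "Im \<tau> > 0" unfolding e by simp
  thus ?thesis using 1 unfolding uhp_def by auto
qed

definition Fd :: "(nat \<Rightarrow> nat) \<Rightarrow> complex fps" where
  "Fd d = Abs_fps (\<lambda>n. of_nat (d n))"

lemma Fd_nth [simp]: "fps_nth (Fd d) n = of_nat (d n)"
  by (simp add: Fd_def)

lemma qchar_eval: "qchar x d \<tau> = qpow (of_real x) \<tau> * eval_fps (Fd d) (qpow 1 \<tau>)"
  unfolding qchar_def eval_fps_def by (simp add: qpow_nat)

lemma Fd_radius: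
  assumes "\<forall>\<tau>\<in>uhp. summable (\<lambda>n. of_nat (d n) * qpow (of_nat n) \<tau>)"
  shows "fps_conv_radius (Fd d) \<ge> 1"
  unfolding fps_conv_radius_def
proof (rule conv_radius_geI_ex')
  fix r :: real assume r: "0 < r" "ereal r < 1"
  then obtain \<tau> where t: "\<tau> \<in> uhp" "qpow 1 \<tau> = of_real r"
    using qpow1_surj[of "of_real r"] by auto
  show "summable (\<lambda>n. fps_nth (Fd d) n * of_real r ^ n)"
  proof -
    have "summable (\<lambda>n. of_nat (d n) * qpow 1 \<tau> ^ n)" using assms t(1) by (simp add: qpow_nat)
    thus ?thesis using t(2) by simp
  qed
qed

lemma radius_poly_bound:
  fixes f :: "nat \<Rightarrow> complex"
  assumes "\<And>n. norm (f n) \<le> C * (real n + 1) ^ 4"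
  shows "conv_radius f \<ge> 1"
proof -
  have cr: "conv_radius (\<lambda>n. (of_real ((real n + 1) ^ 4)) :: complex) = 1"
  proof (rule conv_radius_ratio_limit_nonzero[of _ 1])
    show "(\<lambda>n. norm (of_real ((real n + 1) ^ 4) :: complex) / norm (of_real ((real (Suc n) + 1) ^ 4) :: complex)) \<longlonglongrightarrow> 1"
    proof -
      have "(\<lambda>n. ((real n + 1) ^ 4) / ((real n + 2) ^ 4)) \<longlonglongrightarrow> 1" by real_asymp
      moreover have "\<And>n. norm (of_real ((real n + 1) ^ 4) :: complex) / norm (of_real ((real (Suc n) + 1) ^ 4) :: complex) = ((real n + 1) ^ 4) / ((real n + 2) ^ 4)"
      proof -
        fix n
        have "(of_nat n + 1 :: complex) = of_nat (Suc n)" by simp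
        hence a: "cmod (of_nat n + 1 :: complex) = real n + 1" by (simp only: norm_of_nat)
        have "(2 + of_nat n :: complex) = of_nat (Suc (Suc n))" by simp
        hence b: "cmod (2 + of_nat n :: complex) = real n + 2" by (simp only: norm_of_nat)
        show "norm (of_real ((real n + 1) ^ 4) :: complex) / norm (of_real ((real (Suc n) + 1) ^ 4) :: complex) = ((real n + 1) ^ 4) / ((real n + 2) ^ 4)"
          by (simp add: norm_power a b)
      qed
      ultimately show ?thesis by simp
    qed
  qed (auto simp: one_ereal_def)
  show ?thesis
  proof (rule conv_radius_geI_ex')
    fix r :: real assume r: "0 < r" "ereal r < 1"
    have "summable (\<lambda>n. norm ((of_real ((real n + 1) ^ 4) :: complex) * of_real r ^ n))"
      using r cr by (intro abs_summable_in_conv_radius) auto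
    hence s: "summable (\<lambda>n. C * norm ((of_real ((real n + 1) ^ 4) :: complex) * of_real r ^ n))"
      by (rule summable_mult)
    show "summable (\<lambda>n. f n * of_real r ^ n)"
    proof (rule summable_comparison_test'[OF s])
      fix n :: nat
      have "norm (f n * of_real r ^ n) = norm (f n) * r ^ n" using r by (simp add: norm_mult norm_power)
      also have "\<dots> \<le> C * (real n + 1) ^ 4 * r ^ n" using r assms by (intro mult_right_mono) auto
      also have "\<dots> = C * norm ((of_real ((real n + 1) ^ 4) :: complex) * of_real r ^ n)"
      proof -
        have "norm ((of_real ((real n + 1) ^ 4) :: complex) * of_real r ^ n) = (real n + 1) ^ 4 * r ^ n"
          using r unfolding norm_mult norm_power norm_of_real by simp
        thus ?thesis by simp
      qed
      finally show "norm (f n * of_real r ^ n) \<le> \<dots>" .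
    qed
  qed
qed

lemma sigma_fin: "(n::nat) > 0 \<Longrightarrow> finite {d. d dvd n}"
  by (rule finite_divisors_nat)

lemma sigma_ge1: "n > 0 \<Longrightarrow> sigma_k k n \<ge> 1"
  unfolding sigma_k_def
proof -
  assume n: "n > 0"
  have "(1::nat) ^ k \<le> (\<Sum>d\<in>{d. d dvd n}. d ^ k)"
    by (rule member_le_sum) (auto simp: sigma_fin n)
  thus "1 \<le> (\<Sum>d\<in>{d. d dvd n}. d ^ k)" by simp
qed

lemma sigma_le: "k \<le> 3 \<Longrightarrow> sigma_k k n \<le> (n + 1) ^ 4"
proof (cases "n = 0")
  case True thus ?thesis by (simp add: sigma_k_def)
next
  case False
  assume k: "k \<le> 3"
  have "sigma_k k n \<le> (\<Sum>d\<in>{..n}. d ^ k)" unfolding sigma_k_def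
    using False by (intro sum_mono2) (auto intro!: dvd_imp_le)
  also have "\<dots> \<le> (\<Sum>d\<in>{..n}. n ^ k)" by (intro sum_mono power_mono) auto
  also have "\<dots> = (n + 1) * n ^ k" by simp
  also have "\<dots> \<le> (n + 1) * (n + 1) ^ 3"
  proof -
    have "n ^ k \<le> (n+1) ^ k" by (intro power_mono) auto
    also have "\<dots> \<le> (n+1) ^ 3" using k by (intro power_increasing) auto
    finally show ?thesis by (intro mult_left_mono) auto
  qed
  also have "\<dots> = (n + 1) ^ 4" by (simp add: power_Suc[symmetric] del: power_Suc)
  finally show ?thesis .
qed

definition E2f :: "complex fps" where
  "E2f = Abs_fps (\<lambda>n. if n = 0 then 1 else - 24 * of_nat (sigma_k 1 n))"
definition E4f :: "complex fps" where
  "E4f = Abs_fps (\<lambda>n. if n = 0 then 1 else 240 * of_nat (sigma_k 3 n))"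

lemma E2f_radius: "fps_conv_radius E2f \<ge> 1"
  unfolding fps_conv_radius_def
proof (rule radius_poly_bound[where C = 24])
  fix n
  have "sigma_k 1 n \<le> (n+1)^4" by (rule sigma_le) simp
  hence "real (sigma_k 1 n) \<le> real ((n+1)^4)" by (simp only: of_nat_le_iff)
  hence "real (sigma_k 1 n) \<le> (real n + 1) ^ 4" by (simp add: add.commute)
  thus "norm (fps_nth E2f n) \<le> 24 * (real n + 1) ^ 4"
    by (auto simp: E2f_def norm_mult)
qed

lemma E4f_radius: "fps_conv_radius E4f \<ge> 1"
  unfolding fps_conv_radius_def
proof (rule radius_poly_bound[where C = 240])
  fix n
  have "sigma_k 3 n \<le> (n+1)^4" by (rule sigma_le) simp
  hence "real (sigma_k 3 n) \<le> real ((n+1)^4)" by (simp only: of_nat_le_iff)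
  hence "real (sigma_k 3 n) \<le> (real n + 1) ^ 4" by (simp add: add.commute)
  thus "norm (fps_nth E4f n) \<le> 240 * (real n + 1) ^ 4"
    by (auto simp: E4f_def norm_mult)
qed

lemma ereal_lt1: "norm z < 1 \<Longrightarrow> 1 \<le> (R::ereal) \<Longrightarrow> ereal (norm z) < R"
  by (metis ereal_less(3) less_le_trans one_ereal_def)

lemma E2_eval: assumes "\<tau> \<in> uhp" shows "E2 \<tau> = eval_fps E2f (qpow 1 \<tau>)"
proof -
  let ?q = "qpow 1 \<tau>"
  have s: "summable (\<lambda>n. fps_nth E2f n * ?q ^ n)"
    by (rule summable_fps, rule ereal_lt1[OF uhp_norm[OF assms] E2f_radius])
  have "eval_fps E2f ?q = fps_nth E2f 0 * ?q ^ 0 + (\<Sum>n. fps_nth E2f (Suc n) * ?q ^ Suc n)"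
    unfolding eval_fps_def using suminf_split_head[OF s] by simp
  also have "(\<Sum>n. fps_nth E2f (Suc n) * ?q ^ Suc n) = (\<Sum>n. (-24) * (of_nat (sigma_k 1 (Suc n)) * qpow (of_nat (Suc n)) \<tau>))"
    by (simp add: E2f_def qpow_nat del: of_nat_Suc) (simp only: mult.assoc)
  also have "\<dots> = (-24) * (\<Sum>n. of_nat (sigma_k 1 (Suc n)) * qpow (of_nat (Suc n)) \<tau>)"
  proof (rule suminf_mult)
    have "summable (\<lambda>n. fps_nth E2f (Suc n) * ?q ^ Suc n)" using s by (subst summable_Suc_iff)
    hence "summable (\<lambda>n. (-1/24) * (fps_nth E2f (Suc n) * ?q ^ Suc n))" by (rule summable_mult)
    thus "summable (\<lambda>n. of_nat (sigma_k 1 (Suc n)) * qpow (of_nat (Suc n)) \<tau>)"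
      by (simp add: E2f_def qpow_nat del: of_nat_Suc)
  qed
  finally have "eval_fps E2f ?q = fps_nth E2f 0 * ?q ^ 0 + (-24) * (\<Sum>n. of_nat (sigma_k 1 (Suc n)) * qpow (of_nat (Suc n)) \<tau>)" .
  moreover have "fps_nth E2f 0 = 1" by (simp add: E2f_def)
  ultimately show ?thesis unfolding E2_def by simp
qed

lemma E4_eval: assumes "\<tau> \<in> uhp" shows "E4 \<tau> = eval_fps E4f (qpow 1 \<tau>)"
proof -
  let ?q = "qpow 1 \<tau>"
  have s: "summable (\<lambda>n. fps_nth E4f n * ?q ^ n)"
    by (rule summable_fps, rule ereal_lt1[OF uhp_norm[OF assms] E4f_radius])
  have "eval_fps E4f ?q = fps_nth E4f 0 * ?q ^ 0 + (\<Sum>n. fps_nth E4f (Suc n) * ?q ^ Suc n)"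
    unfolding eval_fps_def using suminf_split_head[OF s] by simp
  also have "(\<Sum>n. fps_nth E4f (Suc n) * ?q ^ Suc n) = (\<Sum>n. 240 * (of_nat (sigma_k 3 (Suc n)) * qpow (of_nat (Suc n)) \<tau>))"
    by (simp add: E4f_def qpow_nat del: of_nat_Suc) (simp only: mult.assoc)
  also have "\<dots> = 240 * (\<Sum>n. of_nat (sigma_k 3 (Suc n)) * qpow (of_nat (Suc n)) \<tau>)"
  proof (rule suminf_mult)
    have "summable (\<lambda>n. fps_nth E4f (Suc n) * ?q ^ Suc n)" using s by (subst summable_Suc_iff)
    hence "summable (\<lambda>n. (1/240) * (fps_nth E4f (Suc n) * ?q ^ Suc n))" by (rule summable_mult)
    thus "summable (\<lambda>n. of_nat (sigma_k 3 (Suc n)) * qpow (of_nat (Suc n)) \<tau>)"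
      by (simp add: E4f_def qpow_nat del: of_nat_Suc)
  qed
  finally have "eval_fps E4f ?q = fps_nth E4f 0 * ?q ^ 0 + 240 * (\<Sum>n. of_nat (sigma_k 3 (Suc n)) * qpow (of_nat (Suc n)) \<tau>)" .
  moreover have "fps_nth E4f 0 = 1" by (simp add: E4f_def)
  ultimately show ?thesis unfolding E4_def by simp
qed

definition th :: "complex \<Rightarrow> complex fps \<Rightarrow> complex fps" where
  "th x A = fps_const x * A + fps_X * fps_deriv A"

lemma th_nth [simp]: "fps_nth (th x A) n = (x + of_nat n) * fps_nth A n"
  by (cases n) (auto simp: th_def fps_X_mult_nth algebra_simps)

lemma th_radius: assumes "fps_conv_radius A \<ge> 1" shows "fps_conv_radius (th x A) \<ge> 1"
proof -
  have "fps_conv_radius (fps_const x * A) \<ge> 1"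
    using fps_conv_radius_mult[of "fps_const x" A] assms by (auto simp: min_def split: if_splits)
  moreover have "fps_conv_radius (fps_X * fps_deriv A) \<ge> 1"
    using fps_conv_radius_mult[of fps_X "fps_deriv A"] fps_conv_radius_deriv[of A] assms
    by (auto simp: min_def split: if_splits)
  ultimately show ?thesis unfolding th_def
    using fps_conv_radius_add[of "fps_const x * A" "fps_X * fps_deriv A"]
    by (auto simp: min_def split: if_splits)
qed

lemma th_eval:
  assumes "fps_conv_radius A \<ge> 1" "norm z < 1"
  shows "eval_fps (th x A) z = x * eval_fps A z + z * eval_fps (fps_deriv A) z"
proof -
  have rA: "ereal (norm z) < fps_conv_radius A" by (rule ereal_lt1[OF assms(2,1)])
  have rD: "ereal (norm z) < fps_conv_radius (fps_deriv A)"
    using rA fps_conv_radius_deriv[of A] by (meson less_le_trans)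
  have rcA: "ereal (norm z) < fps_conv_radius (fps_const x * A)"
    using fps_conv_radius_mult[of "fps_const x" A] rA by (auto simp: min_def split: if_splits)
  have rXD: "ereal (norm z) < fps_conv_radius (fps_X * fps_deriv A)"
    using fps_conv_radius_mult[of fps_X "fps_deriv A"] rD by (auto simp: min_def split: if_splits)
  show ?thesis unfolding th_def
    by (simp add: eval_fps_add[OF rcA rXD] eval_fps_mult[OF _ rA] eval_fps_mult[OF _ rD])
qed

lemma qpow_deriv: "((\<lambda>t. qpow x t) has_field_derivative (2 * of_real pi * \<i> * x) * qpow x t) (at t)"
  unfolding qpow_def by (auto intro!: derivative_eq_intros)

lemma serre0:
  assumes rA: "fps_conv_radius A \<ge> 1"
      and Z: "\<forall>t\<in>uhp. Z t = qpow x t * eval_fps A (qpow 1 t)"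
      and t: "t \<in> uhp"
  shows "serre_D 0 Z t = qpow x t * eval_fps (th x A) (qpow 1 t)"
proof -
  let ?q = "qpow 1 t"
  have nq: "norm ?q < 1" using uhp_norm[OF t] .
  have r: "ereal (norm ?q) < fps_conv_radius A" by (rule ereal_lt1[OF nq rA])
  have d2: "((\<lambda>t. eval_fps A (qpow 1 t)) has_field_derivative
            eval_fps (fps_deriv A) ?q * ((2 * of_real pi * \<i> * 1) * ?q)) (at t)"
    by (rule DERIV_chain2[OF has_field_derivative_eval_fps[OF r] qpow_deriv])
  have dG: "((\<lambda>t. qpow x t * eval_fps A (qpow 1 t)) has_field_derivative
     (2 * of_real pi * \<i> * x) * qpow x t * eval_fps A ?q +
      eval_fps (fps_deriv A) ?q * ((2 * of_real pi * \<i> * 1) * ?q) * qpow x t) (at t)"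
    by (rule DERIV_mult[OF qpow_deriv d2])
  have dZ: "(Z has_field_derivative
     (2 * of_real pi * \<i> * x) * qpow x t * eval_fps A ?q +
      eval_fps (fps_deriv A) ?q * ((2 * of_real pi * \<i> * 1) * ?q) * qpow x t) (at t)"
    by (rule has_field_derivative_transform_within_open[OF dG open_uhp t]) (use Z in auto)
  have "serre_D 0 Z t = ((2 * of_real pi * \<i> * x) * qpow x t * eval_fps A ?q +
      eval_fps (fps_deriv A) ?q * ((2 * of_real pi * \<i> * 1) * ?q) * qpow x t) / (2 * of_real pi * \<i>)"
    unfolding serre_D_def using DERIV_imp_deriv[OF dZ] by simp
  also have "\<dots> = qpow x t * (x * eval_fps A ?q + ?q * eval_fps (fps_deriv A) ?q)"
    by (simp add: field_simps)
  also have "\<dots> = qpow x t * eval_fps (th x A) ?q" by (simp add: th_eval[OF rA nq])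
  finally show ?thesis .
qed

lemma serre_k: "serre_D k f t = serre_D 0 f t - of_real (k / 12) * E2 t * f t"
  unfolding serre_D_def by simp

definition Cf :: "complex \<Rightarrow> complex \<Rightarrow> complex fps \<Rightarrow> complex fps" where
  "Cf k1 x A = th x (th x A) - fps_const (1/6) * E2f * th x A + fps_const k1 * E4f * A"

lemma mlde_coeffs:
  assumes rA: "fps_conv_radius A \<ge> 1"
      and Z: "\<forall>t\<in>uhp. Z t = qpow x t * eval_fps A (qpow 1 t)"
      and sol: "mlde_sol k1 Z"
  shows "Cf k1 x A = 0"
proof -
  have r1: "fps_conv_radius (th x A) \<ge> 1" by (rule th_radius[OF rA])
  have r2: "fps_conv_radius (th x (th x A)) \<ge> 1" by (rule th_radius[OF r1])
  have Y: "\<forall>t\<in>uhp. serre_D 0 Z t = qpow x t * eval_fps (th x A) (qpow 1 t)"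
    using serre0[OF rA Z] by blast
  have ev: "eval_fps (Cf k1 x A) z = 0" if z: "z \<noteq> 0" "norm z < 1" for z
  proof -
    obtain t where t: "t \<in> uhp" "qpow 1 t = z" using qpow1_surj[OF z] by auto
    have D: "D0sq Z t = qpow x t * eval_fps (th x (th x A)) z
           - of_real (2/12) * E2 t * (qpow x t * eval_fps (th x A) z)"
      unfolding D0sq_def serre_k[of 2] using serre0[OF r1 Y t(1)] Y t by simp
    have S: "D0sq Z t + k1 * E4 t * Z t = 0" using sol t unfolding mlde_sol_def by blast
    have "qpow x t * (eval_fps (th x (th x A)) z - (1/6) * eval_fps E2f z * eval_fps (th x A) z
        + k1 * eval_fps E4f z * eval_fps A z) = D0sq Z t + k1 * E4 t * Z t"
      unfolding D using Z t E2_eval[OF t(1)] E4_eval[OF t(1)] by (simp add: algebra_simps)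
    hence "qpow x t * (eval_fps (th x (th x A)) z - (1/6) * eval_fps E2f z * eval_fps (th x A) z
        + k1 * eval_fps E4f z * eval_fps A z) = 0" using S by simp
    hence e: "eval_fps (th x (th x A)) z - (1/6) * eval_fps E2f z * eval_fps (th x A) z
        + k1 * eval_fps E4f z * eval_fps A z = 0" using qpow_nz by simp
    have lt: "\<And>R. R \<ge> 1 \<Longrightarrow> ereal (norm z) < R" using ereal_lt1[OF z(2)] by blast
    have a1: "ereal (norm z) < fps_conv_radius (fps_const (1/6) * E2f)"
      using fps_conv_radius_mult[of "fps_const (1/6)" E2f] E2f_radius lt[of 1]
      by (auto simp: min_def split: if_splits intro: lt)
    have a2: "ereal (norm z) < fps_conv_radius (fps_const (1/6) * E2f * th x A)"
      using fps_conv_radius_mult[of "fps_const (1/6) * E2f" "th x A"] a1 lt[OF r1]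
      by (auto simp: min_def split: if_splits)
    have a3: "ereal (norm z) < fps_conv_radius (fps_const k1 * E4f)"
      using fps_conv_radius_mult[of "fps_const k1" E4f] E4f_radius lt[of 1]
      by (auto simp: min_def split: if_splits intro: lt)
    have a4: "ereal (norm z) < fps_conv_radius (fps_const k1 * E4f * A)"
      using fps_conv_radius_mult[of "fps_const k1 * E4f" "A"] a3 lt[OF rA]
      by (auto simp: min_def split: if_splits)
    have a5: "ereal (norm z) < fps_conv_radius (th x (th x A) - fps_const (1/6) * E2f * th x A)"
      using fps_conv_radius_diff[of "th x (th x A)" "fps_const (1/6) * E2f * th x A"] a2 lt[OF r2]
      by (auto simp: min_def split: if_splits)
    have "eval_fps (Cf k1 x A) z = eval_fps (th x (th x A)) z - (1/6) * eval_fps E2f z * eval_fps (th x A) z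
        + k1 * eval_fps E4f z * eval_fps A z"
      unfolding Cf_def
      by (simp add: eval_fps_add[OF a5 a4] eval_fps_diff[OF lt[OF r2] a2]
           eval_fps_mult[OF a1 lt[OF r1]] eval_fps_mult[OF a3 lt[OF rA]]
           eval_fps_mult[OF _ lt[OF E2f_radius]] eval_fps_mult[OF _ lt[OF E4f_radius]])
    with e show ?thesis by simp
  qed
  have ge1: "\<And>a b::ereal. a \<ge> 1 \<Longrightarrow> b \<ge> 1 \<Longrightarrow> min a b \<ge> 1" by (simp add: min_def)
  have rC: "fps_conv_radius (Cf k1 x A) \<ge> 1" unfolding Cf_def
    by (rule order.trans[OF _ fps_conv_radius_add], rule ge1,
        rule order.trans[OF _ fps_conv_radius_diff], rule ge1, rule r2,
        rule order.trans[OF _ fps_conv_radius_mult], rule ge1,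
        rule order.trans[OF _ fps_conv_radius_mult], rule ge1, simp, rule E2f_radius, rule r1,
        rule order.trans[OF _ fps_conv_radius_mult], rule ge1,
        rule order.trans[OF _ fps_conv_radius_mult], rule ge1, simp, rule E4f_radius, rule rA)
  have ev0: "eval_fps (Cf k1 x A) 0 = 0"
  proof -
    have "isCont (eval_fps (Cf k1 x A)) 0"
      by (rule continuous_eval_fps, rule ereal_lt1[OF _ rC]) simp
    hence l1: "(eval_fps (Cf k1 x A) \<longlongrightarrow> eval_fps (Cf k1 x A) 0) (at 0)"
      by (simp add: isCont_def)
    have "eventually (\<lambda>z. z \<in> ball (0::complex) 1) (at 0)"
      by (rule eventually_at_in_open') auto
    hence "eventually (\<lambda>z. eval_fps (Cf k1 x A) z = 0) (at 0)"
      unfolding eventually_at_filter by eventually_elim (auto intro: ev)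
    hence l2: "(eval_fps (Cf k1 x A) \<longlongrightarrow> 0) (at 0)" by (rule tendsto_eventually)
    show ?thesis using tendsto_unique[OF _ l1 l2] by simp
  qed
  have "eventually (\<lambda>z. z \<in> ball (0::complex) 1) (nhds 0)"
    by (rule eventually_nhds_in_open) auto
  hence "eventually (\<lambda>z. eval_fps (Cf k1 x A) z = eval_fps 0 z) (nhds 0)"
    by eventually_elim (auto intro: ev ev0 simp: dist_norm)
  moreover have "ereal (norm (0::complex)) < fps_conv_radius (Cf k1 x A)"
    by (rule ereal_lt1[OF _ rC]) simp
  hence "fps_conv_radius (Cf k1 x A) > 0" by (simp add: zero_ereal_def)
  ultimately show ?thesis
    by (intro eval_fps_eqD) auto
qed

lemma Cf_nth0: "fps_nth (Cf k1 x A) 0 = (x * x - x / 6 + k1) * fps_nth A 0"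
  by (simp add: Cf_def E2f_def E4f_def algebra_simps)

lemma indicial:
  assumes "fps_conv_radius A \<ge> 1"
      and "\<forall>t\<in>uhp. Z t = qpow x t * eval_fps A (qpow 1 t)"
      and "mlde_sol k1 Z" and "fps_nth A 0 \<noteq> 0"
  shows "x * x - x / 6 + k1 = 0"
  using mlde_coeffs[OF assms(1-3)] Cf_nth0[of k1 x A] assms(4) by simp

lemma Cf_nthN:
  assumes dN: "\<forall>n\<ge>N. d n = 0"
  shows "fps_nth (Cf (of_real \<kappa>) (of_real a) (Fd d)) N =
    of_real (\<Sum>i=0..N. (if i = 0 then 0 else
       (240 * \<kappa> * real (sigma_k 3 i) + 4 * real (sigma_k 1 i) * (a + real (N - i))) * real (d (N - i))))"
proof -
  have "fps_nth (Cf (of_real \<kappa>) (of_real a) (Fd d)) N =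
     (\<Sum>i=0..N. of_real \<kappa> * fps_nth E4f i * of_nat (d (N - i)))
     - (\<Sum>i=0..N. (1/6) * fps_nth E2f i * ((of_real a + of_nat (N - i)) * of_nat (d (N - i))))
     + (of_real a + of_nat N) * ((of_real a + of_nat N) * of_nat (d N))"
    apply (simp only: Cf_def mult.assoc fps_add_nth fps_sub_nth fps_mult_left_const_nth)
    apply (simp only: fps_mult_nth th_nth Fd_nth)
    by (simp add: sum_distrib_left algebra_simps)
  also have "\<dots> = (\<Sum>i=0..N. of_real \<kappa> * fps_nth E4f i * of_nat (d (N - i))
         - (1/6) * fps_nth E2f i * ((of_real a + of_nat (N - i)) * of_nat (d (N - i))))"
    using dN by (simp add: sum_subtractf)
  also have "\<dots> = (\<Sum>i=0..N. of_real (if i = 0 then 0 else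
       (240 * \<kappa> * real (sigma_k 3 i) + 4 * real (sigma_k 1 i) * (a + real (N - i))) * real (d (N - i))))"
  proof (rule sum.cong[OF refl])
    fix i assume i: "i \<in> {0..N}"
    show "of_real \<kappa> * fps_nth E4f i * of_nat (d (N - i))
         - (1/6) * fps_nth E2f i * ((of_real a + of_nat (N - i)) * of_nat (d (N - i))) =
       (of_real (if i = 0 then 0 else
       (240 * \<kappa> * real (sigma_k 3 i) + 4 * real (sigma_k 1 i) * (a + real (N - i))) * real (d (N - i))) :: complex)"
    proof (cases "i = 0")
      case True thus ?thesis using dN by simp
    next
      case False thus ?thesis by (simp add: E2f_def E4f_def algebra_simps)
    qed
  qed
  also have "\<dots> = of_real (\<Sum>i=0..N. (if i = 0 then 0 else
       (240 * \<kappa> * real (sigma_k 3 i) + 4 * real (sigma_k 1 i) * (a + real (N - i))) * real (d (N - i))))"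
    by simp
  finally show ?thesis .
qed

lemma poly_case:
  assumes C: "Cf (of_real \<kappa>) (of_real a) (Fd d) = 0" and d0: "d 0 = 1"
      and dN: "\<forall>n\<ge>N. d n = 0" and N: "N \<ge> 1" and k: "\<kappa> \<ge> 0" and a: "a \<ge> 0"
  shows "a = 0 \<and> (\<forall>n\<ge>1. d n = 0)"
proof -
  define T where "T i = (if i = 0 then 0 else
       (240 * \<kappa> * real (sigma_k 3 i) + 4 * real (sigma_k 1 i) * (a + real (N - i))) * real (d (N - i)))" for i
  have "fps_nth (Cf (of_real \<kappa>) (of_real a) (Fd d)) N = 0" using C by simp
  hence "complex_of_real (\<Sum>i=0..N. T i) = 0"
    using Cf_nthN[OF dN, of \<kappa> a] unfolding T_def by (simp del: of_real_sum)
  hence sum0: "(\<Sum>i=0..N. T i) = 0" by (simp only: of_real_eq_0_iff)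
  have nn: "\<forall>i\<in>{0..N}. T i \<ge> 0" unfolding T_def using k a by auto
  have "sum T {0..N} = 0 \<longleftrightarrow> (\<forall>i\<in>{0..N}. T i = 0)"
    by (rule sum_nonneg_eq_0_iff) (use nn in auto)
  hence all0: "\<forall>i\<in>{0..N}. T i = 0" using sum0 by blast
  have TN: "T N = 0" using all0 by simp
  have s1: "real (sigma_k 1 N) \<ge> 1" "real (sigma_k 3 N) \<ge> 1"
    using sigma_ge1[of N 1] sigma_ge1[of N 3] N by auto
  have "(240 * \<kappa> * real (sigma_k 3 N) + 4 * real (sigma_k 1 N) * a) = 0"
    using TN N d0 unfolding T_def by simp
  moreover have "240 * \<kappa> * real (sigma_k 3 N) \<ge> 0" "4 * real (sigma_k 1 N) * a \<ge> 0"
    using k a s1 by auto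
  ultimately have "\<kappa> * real (sigma_k 3 N) = 0" "real (sigma_k 1 N) * a = 0" by linarith+
  hence k0: "\<kappa> = 0" and a0: "a = 0" using s1 by auto
  have "d n = 0" if n: "n \<ge> 1" for n
  proof (cases "n \<ge> N")
    case True thus ?thesis using dN by simp
  next
    case False
    define i where "i = N - n"
    have i: "i \<in> {0..N}" "i \<noteq> 0" "N - i = n" using False n unfolding i_def by auto
    have "T i = 0" using all0 i by blast
    hence "4 * real (sigma_k 1 i) * real n * real (d n) = 0"
      unfolding T_def using i k0 a0 by simp
    moreover have "real (sigma_k 1 i) \<ge> 1" using sigma_ge1[of i 1] i by auto
    ultimately show ?thesis using n by simp
  qed
  thus ?thesis using a0 by blast
qed

definition Sr :: "(nat \<Rightarrow> nat) \<Rightarrow> real \<Rightarrow> real" where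
  "Sr d r = (\<Sum>n. real (d n) * r ^ n)"

lemma Sr_summable:
  assumes "fps_conv_radius (Fd d) \<ge> 1" "0 \<le> r" "r < 1"
  shows "summable (\<lambda>n. real (d n) * r ^ n)"
proof -
  have "ereal (norm (of_real r :: complex)) < fps_conv_radius (Fd d)"
    by (rule ereal_lt1[OF _ assms(1)]) (use assms in simp)
  from norm_summable_fps[OF this] show ?thesis
    using assms by (simp add: norm_mult norm_power)
qed

lemma eval_Fd_real:
  assumes "fps_conv_radius (Fd d) \<ge> 1" "0 \<le> r" "r < 1"
  shows "eval_fps (Fd d) (of_real r) = of_real (Sr d r)"
proof -
  have "(\<lambda>n. real (d n) * r ^ n) sums Sr d r"
    unfolding Sr_def using Sr_summable[OF assms] by (rule summable_sums)
  hence "(\<lambda>n. of_real (real (d n) * r ^ n) :: complex) sums of_real (Sr d r)"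
    by (rule sums_of_real)
  hence "(\<lambda>n. fps_nth (Fd d) n * of_real r ^ n) sums of_real (Sr d r)" by simp
  thus ?thesis unfolding eval_fps_def by (simp add: sums_iff)
qed

lemma Sr_nonneg: assumes "fps_conv_radius (Fd d) \<ge> 1" "0 \<le> r" "r < 1" shows "Sr d r \<ge> 0"
  unfolding Sr_def using assms by (intro suminf_nonneg Sr_summable) auto

lemma Sr_mono:
  assumes "fps_conv_radius (Fd d) \<ge> 1" "0 \<le> r" "r \<le> r'" "r' < 1"
  shows "Sr d r \<le> Sr d r'"
  unfolding Sr_def
proof (rule suminf_le)
  show "summable (\<lambda>n. real (d n) * r ^ n)" by (rule Sr_summable) (use assms in auto)
  show "summable (\<lambda>n. real (d n) * r' ^ n)" by (rule Sr_summable) (use assms in auto)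
  fix n show "real (d n) * r ^ n \<le> real (d n) * r' ^ n"
    using assms by (intro mult_left_mono power_mono) auto
qed

lemma Sr_partial:
  assumes "fps_conv_radius (Fd d) \<ge> 1" "0 \<le> r" "r < 1"
  shows "(\<Sum>n<N. real (d n) * r ^ n) \<le> Sr d r"
  unfolding Sr_def using assms by (intro sum_le_suminf Sr_summable) auto

lemma qpow_imag: "qpow (of_real x) (\<i> * of_real y) = of_real (exp (- 2 * pi * x * y))"
proof -
  have "2 * of_real pi * \<i> * of_real x * (\<i> * of_real y) = (of_real (- 2 * pi * x * y) :: complex)"
    by (simp add: algebra_simps)
  thus ?thesis unfolding qpow_def by (simp only: exp_of_real)
qed

lemma qchar_imag:
  assumes "fps_conv_radius (Fd d) \<ge> 1" "y > 0"
  shows "qchar x d (\<i> * of_real y) = of_real (exp (- 2 * pi * x * y) * Sr d (exp (- 2 * pi * y)))"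
proof -
  have q: "qpow 1 (\<i> * of_real y) = of_real (exp (- 2 * pi * y))"
    using qpow_imag[of 1 y] by simp
  have "exp (- 2 * pi * y) < 1" using assms by simp
  thus ?thesis unfolding qchar_eval qpow_imag q
    by (subst eval_Fd_real[OF assms(1)]) auto
qed

lemma bounded_partial_finite:
  fixes d :: "nat \<Rightarrow> nat"
  assumes "\<forall>N. (\<Sum>n<N. real (d n)) \<le> B"
  shows "\<exists>N. \<forall>n\<ge>N. d n = 0"
proof (rule ccontr)
  assume "\<not> (\<exists>N. \<forall>n\<ge>N. d n = 0)"
  hence inf: "\<forall>N. \<exists>n\<ge>N. d n \<noteq> 0" by auto
  have "\<exists>N. (\<Sum>n<N. real (d n)) \<ge> real k" for k
  proof (induction k)
    case 0
    have "real 0 \<le> (\<Sum>n<0. real (d n))" by simp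
    thus ?case by blast
  next
    case (Suc k)
    then obtain N where N: "(\<Sum>n<N. real (d n)) \<ge> real k" by blast
    obtain n where n: "n \<ge> N" "d n \<noteq> 0" using inf by blast
    have "(\<Sum>n<N. real (d n)) \<le> (\<Sum>n<n. real (d n))"
      using n by (intro sum_mono2) auto
    hence "(\<Sum>m<Suc n. real (d m)) \<ge> real k + real (d n)" using N by simp
    moreover have "real (d n) \<ge> 1" using n by simp
    ultimately show ?case by (intro exI[of _ "Suc n"]) simp
  qed
  then obtain N where N: "(\<Sum>n<N. real (d n)) \<ge> real (nat \<lceil>B\<rceil> + 1)" by blast
  have "real (nat \<lceil>B\<rceil> + 1) > B" by linarith
  moreover have "(\<Sum>n<N. real (d n)) \<le> B" using assms by blast
  ultimately show False using N by linarith
qed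

lemma growth:
  assumes rV: "fps_conv_radius (Fd dV) \<ge> 1" and rM: "fps_conv_radius (Fd dM) \<ge> 1"
      and a: "a \<ge> 0" and b: "b \<ge> 0"
      and S: "\<forall>\<tau>\<in>uhp. qchar a dV (- 1 / \<tau>) = \<alpha> * qchar a dV \<tau> + \<beta> * qchar b dM \<tau>"
  shows "\<exists>N. \<forall>n\<ge>N. dV n = 0"
proof -
  define r0 where "r0 = exp (- 2 * pi)"
  have r0: "0 \<le> r0" "r0 < 1" unfolding r0_def by auto
  define K where "K = norm \<alpha> * Sr dV r0 + norm \<beta> * Sr dM r0"
  have bound: "exp (- 2 * pi * a / y) * Sr dV (exp (- 2 * pi / y)) \<le> K" if y: "y \<ge> 1" for y
  proof -
    have y0: "y > 0" using y by simp
    have t: "\<i> * of_real y \<in> uhp" using y0 by (simp add: uhp_def)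
    have yn: "complex_of_real y \<noteq> 0" using y0 by simp
    have inv: "- 1 / (\<i> * of_real y) = \<i> * of_real (1 / y)"
      using yn by (simp add: field_simps)
    have "qchar a dV (\<i> * of_real (1/y)) = \<alpha> * qchar a dV (\<i> * of_real y) + \<beta> * qchar b dM (\<i> * of_real y)"
    proof -
      have "qchar a dV (- 1 / (\<i> * of_real y)) = \<alpha> * qchar a dV (\<i> * of_real y) + \<beta> * qchar b dM (\<i> * of_real y)"
        using S t by blast
      thus ?thesis unfolding inv .
    qed
    hence "norm (qchar a dV (\<i> * of_real (1/y))) \<le> norm \<alpha> * norm (qchar a dV (\<i> * of_real y))
          + norm \<beta> * norm (qchar b dM (\<i> * of_real y))"
      using norm_triangle_ineq[of "\<alpha> * qchar a dV (\<i> * of_real y)" "\<beta> * qchar b dM (\<i> * of_real y)"]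
      by (simp add: norm_mult)
    also have "norm (qchar a dV (\<i> * of_real y)) \<le> Sr dV r0"
    proof -
      have e: "exp (- 2 * pi * y) < 1" "exp (- 2 * pi * y) \<le> r0" using y unfolding r0_def by auto
      have "norm (qchar a dV (\<i> * of_real y)) = exp (- 2 * pi * a * y) * Sr dV (exp (- 2 * pi * y))"
        unfolding qchar_imag[OF rV y0] using Sr_nonneg[OF rV _ e(1)] by (simp add: norm_mult abs_of_nonneg)
      also have "\<dots> \<le> 1 * Sr dV r0"
        using Sr_nonneg[OF rV _ e(1)] Sr_mono[OF rV _ e(2) r0(2)] a y0
        by (intro mult_mono) auto
      finally show ?thesis by simp
    qed
    also have "norm (qchar b dM (\<i> * of_real y)) \<le> Sr dM r0"
    proof -
      have e: "exp (- 2 * pi * y) < 1" "exp (- 2 * pi * y) \<le> r0" using y unfolding r0_def by auto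
      have "norm (qchar b dM (\<i> * of_real y)) = exp (- 2 * pi * b * y) * Sr dM (exp (- 2 * pi * y))"
        unfolding qchar_imag[OF rM y0] using Sr_nonneg[OF rM _ e(1)] by (simp add: norm_mult abs_of_nonneg)
      also have "\<dots> \<le> 1 * Sr dM r0"
        using Sr_nonneg[OF rM _ e(1)] Sr_mono[OF rM _ e(2) r0(2)] b y0
        by (intro mult_mono) auto
      finally show ?thesis by simp
    qed
    finally have 1: "norm (qchar a dV (\<i> * of_real (1/y))) \<le> K"
      unfolding K_def by (simp add: mult_left_mono)
    have e1: "exp (- 2 * pi / y) < 1" using y0 by simp
    have q: "qchar a dV (\<i> * of_real (1/y)) = of_real (exp (- 2 * pi * a * (1/y)) * Sr dV (exp (- 2 * pi * (1/y))))"
      by (rule qchar_imag[OF rV]) (use y0 in simp)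
    have "norm (qchar a dV (\<i> * of_real (1/y))) = exp (- 2 * pi * a / y) * Sr dV (exp (- 2 * pi / y))"
      unfolding q using y0 Sr_nonneg[OF rV _ e1] by (simp add: norm_mult abs_of_nonneg)
    with 1 show ?thesis by simp
  qed
  define B where "B = K * exp (2 * pi * a) * exp (2 * pi)"
  have "(\<Sum>n<N. real (dV n)) \<le> B" for N
  proof (cases "N = 0")
    case True
    have "K \<ge> 0" unfolding K_def using Sr_nonneg[OF rV r0] Sr_nonneg[OF rM r0] by simp
    thus ?thesis using True unfolding B_def by simp
  next
    case False
    define y where "y = real N"
    have y: "y \<ge> 1" using False unfolding y_def by simp
    define r where "r = exp (- 2 * pi / y)"
    have r: "0 \<le> r" "r < 1" "r \<le> 1" using y unfolding r_def by auto
    have rN: "r ^ N = exp (- 2 * pi)"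
      unfolding r_def y_def using False by (simp add: exp_of_nat_mult[symmetric])
    have "exp (- 2 * pi) * (\<Sum>n<N. real (dV n)) = (\<Sum>n<N. real (dV n) * r ^ N)"
      unfolding sum_distrib_left rN by (rule sum.cong[OF refl]) (rule mult.commute)
    also have "\<dots> \<le> (\<Sum>n<N. real (dV n) * r ^ n)"
      using r by (intro sum_mono mult_left_mono power_decreasing) auto
    also have "\<dots> \<le> Sr dV r" by (rule Sr_partial[OF rV r(1,2)])
    also have "\<dots> \<le> K * exp (2 * pi * a / y)"
    proof -
      have "exp (- 2 * pi * a / y) * Sr dV r \<le> K" using bound[OF y] unfolding r_def .
      hence "exp (2 * pi * a / y) * (exp (- 2 * pi * a / y) * Sr dV r) \<le> exp (2 * pi * a / y) * K"
        by (intro mult_left_mono) auto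
      moreover have "exp (2 * pi * a / y) * exp (- 2 * pi * a / y) = 1"
        by (simp add: exp_add[symmetric])
      ultimately have "Sr dV r \<le> exp (2 * pi * a / y) * K"
        by (simp only: mult.assoc[symmetric] mult_1)
      thus ?thesis by (simp only: mult.commute)
    qed
    also have "\<dots> \<le> K * exp (2 * pi * a)"
    proof (rule mult_left_mono)
      show "K \<ge> 0" unfolding K_def using Sr_nonneg[OF rV r0] Sr_nonneg[OF rM r0] by simp
      have "a * 1 \<le> a * y" using a y by (intro mult_left_mono) auto
      hence "a / y \<le> a" using y by (simp add: divide_le_eq)
      hence "2 * pi * (a / y) \<le> 2 * pi * a" by (intro mult_left_mono) auto
      thus "exp (2 * pi * a / y) \<le> exp (2 * pi * a)" by simp
    qed
    finally have "exp (- 2 * pi) * (\<Sum>n<N. real (dV n)) \<le> K * exp (2 * pi * a)" .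
    hence "exp (2 * pi) * (exp (- 2 * pi) * (\<Sum>n<N. real (dV n))) \<le> exp (2 * pi) * (K * exp (2 * pi * a))"
      by (intro mult_left_mono) auto
    moreover have "exp (2 * pi) * exp (- 2 * pi) = 1" by (simp add: exp_add[symmetric])
    ultimately have "(\<Sum>n<N. real (dV n)) \<le> exp (2 * pi) * (K * exp (2 * pi * a))"
      by (simp only: mult.assoc[symmetric] mult_1)
    thus ?thesis unfolding B_def by (simp only: ac_simps)
  qed
  thus ?thesis by (intro bounded_partial_finite) blast
qed

lemma qpow_shift: "qpow x (\<tau> + 1) = qpow x 1 * qpow x \<tau>"
  unfolding qpow_def by (simp add: exp_add[symmetric] algebra_simps)

lemma qpow1_shift: "qpow 1 (\<tau> + 1) = qpow 1 \<tau>"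
  unfolding qpow_shift by (simp add: qpow_def)

lemma qchar_shift: "qchar x d (\<tau> + 1) = qpow (of_real x) 1 * qchar x d \<tau>"
  unfolding qchar_def qpow_nat qpow1_shift by (simp add: qpow_shift)

lemma shift_int:
  fixes f :: "complex \<Rightarrow> complex" and l :: complex
  assumes T: "\<forall>\<tau>\<in>uhp. f (\<tau> + 1) = l * f \<tau>" and l: "l \<noteq> 0"
  shows "\<forall>\<tau>\<in>uhp. f (\<tau> + of_int k) = l powi k * f \<tau>"
proof -
  have nat: "\<forall>\<tau>\<in>uhp. f (\<tau> + of_nat n) = l ^ n * f \<tau>" for n
  proof (induction n)
    case 0 show ?case by simp
  next
    case (Suc n)
    show ?case
    proof
      fix \<tau> :: complex assume t: "\<tau> \<in> uhp"
      have t': "\<tau> + of_nat n \<in> uhp" using t by (simp add: uhp_def)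
      have "f (\<tau> + of_nat (Suc n)) = f ((\<tau> + of_nat n) + 1)" by (simp add: algebra_simps)
      also have "\<dots> = l * f (\<tau> + of_nat n)" using T t' by blast
      also have "\<dots> = l ^ Suc n * f \<tau>" using Suc t by simp
      finally show "f (\<tau> + of_nat (Suc n)) = l ^ Suc n * f \<tau>" .
    qed
  qed
  show ?thesis
  proof
    fix \<tau> :: complex assume t: "\<tau> \<in> uhp"
    show "f (\<tau> + of_int k) = l powi k * f \<tau>"
    proof (cases "k \<ge> 0")
      case True
      then obtain n where n: "k = int n" using zero_le_imp_eq_int by blast
      thus ?thesis using nat t by (simp add: power_int_def)
    next
      case False
      hence "- k \<ge> 0" by simp
      then obtain n where "- k = int n" using zero_le_imp_eq_int by blast
      hence n: "k = - int n" by simp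
      have t': "\<tau> - of_nat n \<in> uhp" using t by (simp add: uhp_def)
      have "f \<tau> = f ((\<tau> - of_nat n) + of_nat n)" by simp
      also have "\<dots> = l ^ n * f (\<tau> - of_nat n)" using nat t' by blast
      finally have "f (\<tau> - of_nat n) = inverse (l ^ n) * f \<tau>" using l by (simp add: field_simps)
      thus ?thesis using n by (simp add: power_int_def power_inverse)
    qed
  qed
qed

lemma divw: "(w::complex) \<noteq> 0 \<Longrightarrow> (- X / w) / (- Y / w) = X / Y"
  by (cases "Y = 0") (simp_all add: field_simps)

lemma sl2_gen:
  fixes f :: "complex \<Rightarrow> complex" and l m :: complex
  assumes T: "\<forall>\<tau>\<in>uhp. f (\<tau> + 1) = l * f \<tau>" and l: "l \<noteq> 0"
      and S: "\<forall>\<tau>\<in>uhp. f (- 1 / \<tau>) = m * f \<tau>"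
  shows "\<forall>a b c d. a * d - b * c = 1 \<longrightarrow>
    (\<exists>\<nu>. \<forall>\<tau>\<in>uhp. f ((of_int a * \<tau> + of_int b) / (of_int c * \<tau> + of_int d)) = \<nu> * f \<tau>)"
proof -
  have Ti: "\<forall>\<tau>\<in>uhp. f (\<tau> + of_int k) = l powi k * f \<tau>" for k by (rule shift_int[OF T l])
  have "\<forall>a b c d. nat \<bar>c\<bar> = N \<longrightarrow> a * d - b * c = 1 \<longrightarrow>
    (\<exists>\<nu>. \<forall>\<tau>\<in>uhp. f ((of_int a * \<tau> + of_int b) / (of_int c * \<tau> + of_int d)) = \<nu> * f \<tau>)" for N
  proof (induction N rule: less_induct)
    case (less N)
    show ?case
    proof (intro allI impI)
      fix a b c d :: int
      assume N: "nat \<bar>c\<bar> = N" and det: "a * d - b * c = 1"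
      show "\<exists>\<nu>. \<forall>\<tau>\<in>uhp. f ((of_int a * \<tau> + of_int b) / (of_int c * \<tau> + of_int d)) = \<nu> * f \<tau>"
      proof (cases "c = 0")
        case True
        hence "a * d = 1" using det by simp
        hence "(a = 1 \<and> d = 1) \<or> (a = -1 \<and> d = -1)" by (simp add: zmult_eq_1_iff)
        thus ?thesis
        proof
          assume ad: "a = 1 \<and> d = 1"
          show ?thesis
          proof (intro exI ballI)
            fix \<tau> :: complex assume "\<tau> \<in> uhp"
            thus "f ((of_int a * \<tau> + of_int b) / (of_int c * \<tau> + of_int d)) = l powi b * f \<tau>"
              using Ti[of b] ad True by simp
          qed
        next
          assume ad: "a = -1 \<and> d = -1"
          show ?thesis
          proof (intro exI ballI)
            fix \<tau> :: complex assume "\<tau> \<in> uhp"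
            moreover have "(of_int a * \<tau> + of_int b) / (of_int c * \<tau> + of_int d) = \<tau> + of_int (- b)"
              using ad True by simp
            ultimately show "f ((of_int a * \<tau> + of_int b) / (of_int c * \<tau> + of_int d)) = l powi (-b) * f \<tau>"
              using Ti[of "-b"] by simp
          qed
        qed
      next
        case False
        define n0 where "n0 = - (d div c)"
        define d' where "d' = d mod c"
        have d'eq: "d' = d + c * n0" unfolding d'_def n0_def
          by (simp add: minus_div_mult_eq_mod[symmetric] algebra_simps)
        have lt: "nat \<bar>d'\<bar> < N" unfolding d'_def using N False abs_mod_less[of c d] by simp
        have det2: "(a * n0 + b) * (- c) - (- a) * d' = 1" using det unfolding d'eq by (simp add: algebra_simps)
        obtain \<nu>2 where nu2: "\<forall>\<sigma>\<in>uhp. f ((of_int (a * n0 + b) * \<sigma> + of_int (- a)) / (of_int d' * \<sigma> + of_int (- c))) = \<nu>2 * f \<sigma>"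
          using less.IH[OF lt] det2 by blast
        show ?thesis
        proof (intro exI ballI)
          fix \<tau> :: complex assume t: "\<tau> \<in> uhp"
          define w where "w = \<tau> - of_int n0"
          have w: "w \<in> uhp" using t unfolding w_def uhp_def by simp
          have w0: "w \<noteq> 0" using w unfolding uhp_def by auto
          define \<sigma> where "\<sigma> = - 1 / w"
          have s: "\<sigma> \<in> uhp" using w w0 unfolding \<sigma>_def uhp_def
            by (simp add: Im_divide divide_pos_pos power2_eq_square complex_neq_0 add_pos_pos)
          have num: "of_int (a * n0 + b) * \<sigma> + of_int (- a) = - (of_int a * \<tau> + of_int b) / w"
            unfolding \<sigma>_def w_def using w0 unfolding w_def by (simp add: field_simps)
          have den: "of_int d' * \<sigma> + of_int (- c) = - (of_int c * \<tau> + of_int d) / w"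
            unfolding \<sigma>_def w_def d'eq using w0 unfolding w_def by (simp add: field_simps)
          have mob: "(of_int (a * n0 + b) * \<sigma> + of_int (- a)) / (of_int d' * \<sigma> + of_int (- c))
              = (of_int a * \<tau> + of_int b) / (of_int c * \<tau> + of_int d)"
            unfolding num den using w0 by (rule divw)
          have "f ((of_int a * \<tau> + of_int b) / (of_int c * \<tau> + of_int d)) = \<nu>2 * f \<sigma>"
          proof -
            have "f ((of_int (a * n0 + b) * \<sigma> + of_int (- a)) / (of_int d' * \<sigma> + of_int (- c))) = \<nu>2 * f \<sigma>"
              using nu2 s by blast
            thus ?thesis unfolding mob .
          qed
          also have "f \<sigma> = m * f w" using S w unfolding \<sigma>_def by blast
          also have "f w = inverse (l powi n0) * f \<tau>"
          proof -
            have "f \<tau> = f (w + of_int n0)" unfolding w_def by simp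
            also have "\<dots> = l powi n0 * f w" using Ti w by blast
            finally show ?thesis using l by (simp add: field_simps)
          qed
          finally show "f ((of_int a * \<tau> + of_int b) / (of_int c * \<tau> + of_int d)) =
              (\<nu>2 * (m * inverse (l powi n0))) * f \<tau>" by (simp add: algebra_simps)
        qed
      qed
    qed
  qed
  thus ?thesis by blast
qed

lemma eigvec:
  fixes m11 m12 m21 m22 :: complex
  shows "\<exists>\<alpha> \<beta> \<mu>. (\<alpha>, \<beta>) \<noteq> (0, 0) \<and> \<alpha> * m11 + \<beta> * m21 = \<mu> * \<alpha> \<and> \<alpha> * m12 + \<beta> * m22 = \<mu> * \<beta>"
proof (cases "m21 = 0")
  case True
  thus ?thesis by (intro exI[of _ 0] exI[of _ 1] exI[of _ m22]) simp
next
  case False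
  define t where "t = m11 + m22"
  define D where "D = m11 * m22 - m12 * m21"
  define \<mu> where "\<mu> = (t + csqrt (t^2 - 4 * D)) / 2"
  define s where "s = csqrt (t^2 - 4 * D)"
  have hs: "s * s = t * t - 4 * D" unfolding s_def using power2_csqrt[of "t^2 - 4 * D"]
    by (simp add: power2_eq_square)
  have m2: "2 * \<mu> = t + s" unfolding \<mu>_def s_def by simp
  have "4 * (\<mu> * \<mu> - t * \<mu> + D) = (2 * \<mu>) * (2 * \<mu>) - 2 * t * (2 * \<mu>) + 4 * D"
    by (simp add: algebra_simps)
  also have "\<dots> = (t + s) * (t + s) - 2 * t * (t + s) + 4 * D" unfolding m2 ..
  also have "\<dots> = s * s - t * t + 4 * D" by (simp add: algebra_simps)
  also have "\<dots> = 0" unfolding hs by simp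
  finally have "4 * (\<mu> * \<mu> - t * \<mu> + D) = 0" .
  hence "(4::complex) = 0 \<or> \<mu> * \<mu> - t * \<mu> + D = 0" by (simp only: mult_eq_0_iff)
  hence "\<mu> * \<mu> - t * \<mu> + D = 0" by simp
  hence q: "\<mu> * \<mu> - (m11 + m22) * \<mu> + (m11 * m22 - m12 * m21) = 0"
    unfolding t_def D_def .
  show ?thesis
  proof (intro exI conjI)
    show "(m21, \<mu> - m11) \<noteq> (0, 0)" using False by simp
    show "m21 * m11 + (\<mu> - m11) * m21 = \<mu> * m21" by (simp add: algebra_simps)
    show "m21 * m12 + (\<mu> - m11) * m22 = \<mu> * (\<mu> - m11)"
    proof -
      have "\<mu> * (\<mu> - m11) - (m21 * m12 + (\<mu> - m11) * m22) = \<mu> * \<mu> - (m11 + m22) * \<mu> + (m11 * m22 - m12 * m21)"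
        by (simp add: algebra_simps)
      thus ?thesis using q by simp
    qed
  qed
qed

lemma S_act: "sl2_act (0, -1, 1, 0) F \<tau> = F (- 1 / \<tau>)"
  unfolding sl2_act_def by simp

lemma S_in: "(0, -1, 1, 0) \<in> SL2Z" unfolding SL2Z_def by simp

lemma qchar_const1:
  assumes "d 0 = 1" "\<forall>n\<ge>1. d n = 0"
  shows "qchar 0 d \<tau> = 1"
proof -
  have "(\<lambda>n. of_nat (d n) * qpow (of_nat n) \<tau>) = (\<lambda>n. if n = 0 then 1 else 0)"
    using assms by (auto simp: fun_eq_iff qpow_def)
  moreover have "(\<lambda>n::nat. if n = 0 then (1::complex) else 0) sums 1"
    using sums_single[of 0 "\<lambda>_. 1::complex"] by simp
  ultimately show ?thesis unfolding qchar_def by (simp add: sums_iff qpow_def)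
qed

theorem lemma2p6:
  fixes c h :: real and k1 :: complex and dimV dimM :: "nat \<Rightarrow> nat"
  defines "ZV \<equiv> qchar (- c / 24) dimV"
      and "ZM \<equiv> qchar (h - c / 24) dimM"
  assumes CFT_type: "dimV 0 = 1"
      and M_weight: "dimM 0 \<ge> 1"
      and conv_V: "\<forall>\<tau>\<in>uhp. summable (\<lambda>n. of_nat (dimV n) * qpow (of_nat n) \<tau>)"
      and conv_M: "\<forall>\<tau>\<in>uhp. summable (\<lambda>n. of_nat (dimM n) * qpow (of_nat n) \<tau>)"
      and lin_indep: "\<forall>\<alpha> \<beta>. (\<forall>\<tau>\<in>uhp. \<alpha> * ZV \<tau> + \<beta> * ZM \<tau> = 0) \<longrightarrow> \<alpha> = 0 \<and> \<beta> = 0"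
      and sol_space: "\<forall>f. mlde_sol k1 f \<longleftrightarrow> in_span2 ZV ZM f"
      and invariant: "\<forall>g\<in>SL2Z. \<forall>f. in_span2 ZV ZM f \<longrightarrow> in_span2 ZV ZM (sl2_act g f)"
      and irreducible: "\<forall>\<alpha> \<beta>. (\<alpha>, \<beta>) \<noteq> (0, 0) \<longrightarrow>
          (\<exists>g\<in>SL2Z. \<not> (\<exists>\<mu>. \<forall>\<tau>\<in>uhp.
              sl2_act g (\<lambda>t. \<alpha> * ZV t + \<beta> * ZM t) \<tau> = \<mu> * (\<alpha> * ZV \<tau> + \<beta> * ZM \<tau>)))"
  shows "let a = - c / 24; b = h - c / 24; ceff = c - 24 * min 0 h in
         (-24 * a > 0 \<and> \<not> (-24 * b > 0) \<and> -24 * a = ceff) \<or>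
         (-24 * b > 0 \<and> \<not> (-24 * a > 0) \<and> -24 * b = ceff)"
proof -
  define a where "a = - c / 24"
  define b where "b = h - c / 24"
  have ZVa: "ZV = qchar a dimV" unfolding ZV_def a_def ..
  have ZMb: "ZM = qchar b dimM" unfolding ZM_def b_def ..
  have rV: "fps_conv_radius (Fd dimV) \<ge> 1" by (rule Fd_radius[OF conv_V])
  have rM: "fps_conv_radius (Fd dimM) \<ge> 1" by (rule Fd_radius[OF conv_M])
  have eqV: "\<forall>t\<in>uhp. ZV t = qpow (of_real a) t * eval_fps (Fd dimV) (qpow 1 t)"
    unfolding ZVa by (simp add: qchar_eval)
  have eqM: "\<forall>t\<in>uhp. ZM t = qpow (of_real b) t * eval_fps (Fd dimM) (qpow 1 t)"
    unfolding ZMb by (simp add: qchar_eval)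
  have spanV: "in_span2 ZV ZM ZV" unfolding in_span2_def by (intro exI[of _ 1] exI[of _ 0]) simp
  have spanM: "in_span2 ZV ZM ZM" unfolding in_span2_def by (intro exI[of _ 0] exI[of _ 1]) simp
  have solV: "mlde_sol k1 ZV" using sol_space spanV by blast
  have solM: "mlde_sol k1 ZM" using sol_space spanM by blast
  have indV: "of_real a * of_real a - of_real a / 6 + k1 = 0"
    by (rule indicial[OF rV eqV solV]) (simp add: CFT_type)
  have indM: "of_real b * of_real b - of_real b / 6 + k1 = 0"
    by (rule indicial[OF rM eqM solM]) (use M_weight in simp)
  define \<kappa> where "\<kappa> = a / 6 - a * a"
  have k1: "k1 = of_real \<kappa>" using indV unfolding \<kappa>_def by (simp add: algebra_simps)
  have "complex_of_real (b * b - b / 6 + \<kappa>) = 0"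
    using indM unfolding k1 by simp
  hence "b * b - b / 6 + \<kappa> = 0" by (simp only: of_real_eq_0_iff)
  hence "(a - b) * (a + b - 1 / 6) = 0" unfolding \<kappa>_def by (simp add: algebra_simps diff_divide_distrib)
  hence ab: "a = b \<or> a + b = 1 / 6" by simp
  have "in_span2 ZV ZM (sl2_act (0, -1, 1, 0) ZV)" using invariant S_in spanV by blast
  then obtain m11 m12 where mV: "\<forall>\<tau>\<in>uhp. ZV (- 1 / \<tau>) = m11 * ZV \<tau> + m12 * ZM \<tau>"
    unfolding in_span2_def S_act by blast
  have "in_span2 ZV ZM (sl2_act (0, -1, 1, 0) ZM)" using invariant S_in spanM by blast
  then obtain m21 m22 where mM: "\<forall>\<tau>\<in>uhp. ZM (- 1 / \<tau>) = m21 * ZV \<tau> + m22 * ZM \<tau>"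
    unfolding in_span2_def S_act by blast
  have nab: "a + b = 1 / 6 \<and> a \<noteq> b"
  proof (cases "a = b")
    case True
    define l where "l = qpow (of_real a) 1"
    have l: "l \<noteq> 0" unfolding l_def by (rule qpow_nz)
    obtain \<alpha> \<beta> \<mu> where ev: "(\<alpha>, \<beta>) \<noteq> (0, 0)" "\<alpha> * m11 + \<beta> * m21 = \<mu> * \<alpha>"
      "\<alpha> * m12 + \<beta> * m22 = \<mu> * \<beta>" using eigvec[of m11 m21 m12 m22] by blast
    define f where "f = (\<lambda>t. \<alpha> * ZV t + \<beta> * ZM t)"
    have fT: "\<forall>\<tau>\<in>uhp. f (\<tau> + 1) = l * f \<tau>"
      unfolding f_def ZVa ZMb l_def qchar_shift True by (simp add: algebra_simps)
    have fS: "\<forall>\<tau>\<in>uhp. f (- 1 / \<tau>) = \<mu> * f \<tau>"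
    proof
      fix \<tau> assume t: "\<tau> \<in> uhp"
      have "f (- 1 / \<tau>) = (\<alpha> * m11 + \<beta> * m21) * ZV \<tau> + (\<alpha> * m12 + \<beta> * m22) * ZM \<tau>"
        unfolding f_def using mV mM t by (simp add: algebra_simps)
      also have "\<dots> = \<mu> * f \<tau>" unfolding f_def ev(2,3) by (simp add: algebra_simps)
      finally show "f (- 1 / \<tau>) = \<mu> * f \<tau>" .
    qed
    have gen: "\<forall>a b c d. a * d - b * c = 1 \<longrightarrow>
      (\<exists>\<nu>. \<forall>\<tau>\<in>uhp. f ((of_int a * \<tau> + of_int b) / (of_int c * \<tau> + of_int d)) = \<nu> * f \<tau>)"
      by (rule sl2_gen[OF fT l fS])
    obtain g where g: "g \<in> SL2Z" "\<not> (\<exists>\<mu>. \<forall>\<tau>\<in>uhp. sl2_act g f \<tau> = \<mu> * f \<tau>)"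
      using irreducible ev(1) unfolding f_def by blast
    obtain a' b' c' d' where gq: "g = (a', b', c', d')" by (cases g) auto
    have "a' * d' - b' * c' = 1" using g(1) gq unfolding SL2Z_def by simp
    then obtain \<nu> where "\<forall>\<tau>\<in>uhp. f ((of_int a' * \<tau> + of_int b') / (of_int c' * \<tau> + of_int d')) = \<nu> * f \<tau>"
      using gen by blast
    hence "\<forall>\<tau>\<in>uhp. sl2_act g f \<tau> = \<nu> * f \<tau>" unfolding gq sl2_act_def by simp
    with g(2) show ?thesis by blast
  next
    case False
    with ab show ?thesis by simp
  qed
  have notboth: "\<not> (a \<ge> 0 \<and> b \<ge> 0)"
  proof
    assume nn: "a \<ge> 0 \<and> b \<ge> 0"
    have S: "\<forall>\<tau>\<in>uhp. qchar a dimV (- 1 / \<tau>) = m11 * qchar a dimV \<tau> + m12 * qchar b dimM \<tau>"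
      using mV unfolding ZVa ZMb .
    obtain N where N: "\<forall>n\<ge>N. dimV n = 0" using growth[OF rV rM _ _ S] nn by blast
    have N': "\<forall>n\<ge>max N 1. dimV n = 0" using N by simp
    have C: "Cf (of_real \<kappa>) (of_real a) (Fd dimV) = 0"
      using mlde_coeffs[OF rV eqV solV] unfolding k1 .
    have bb: "b = 1 / 6 - a" using nab by simp
    have "\<kappa> = a * b" unfolding \<kappa>_def bb by (simp add: algebra_simps)
    hence "\<kappa> \<ge> 0" using nn by simp
    from poly_case[OF C CFT_type N' _ this] nn
    have a0: "a = 0" and dz: "\<forall>n\<ge>1. dimV n = 0" by auto
    have one: "ZV t = 1" for t unfolding ZVa a0 by (rule qchar_const1[OF CFT_type dz])
    obtain g where g: "g \<in> SL2Z" "\<not> (\<exists>\<mu>. \<forall>\<tau>\<in>uhp. sl2_act g (\<lambda>t. 1 * ZV t + 0 * ZM t) \<tau> = \<mu> * (1 * ZV \<tau> + 0 * ZM \<tau>))"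
      using irreducible[rule_format, of 1 0] by auto
    have "\<forall>\<tau>\<in>uhp. sl2_act g (\<lambda>t. 1 * ZV t + 0 * ZM t) \<tau> = 1 * (1 * ZV \<tau> + 0 * ZM \<tau>)"
      unfolding sl2_act_def one by (simp split: prod.splits)
    with g(2) show False by blast
  qed
  show ?thesis
    unfolding Let_def using nab notboth unfolding a_def b_def
    by (auto simp: min_def)
qed

end
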